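(* Let $G$ be a locally free group whose rank $r(G)$ is not finite. Then for each finitely generated subgroup $A$ of $G$, there exists an element $x\in G$ with $x\notin A$ such that the subgroup $A\langle x\rangle$ of $G$ generated by $A$ and $x$ is isomorphic to the free product $A*\langle x\rangle$.
   Context: A group is locally free if all of its finitely generated subgroups are free. For a finitely generated subgroup $H$ of a locally free group $G$, $\mu_G(H)$ is the least positive integer $m$ such that $H\subseteq F$ for some free subgroup $F$ of $G$ of rank $m$. The rank $r(G)$ is the maximum of $\{\mu_G(H) : H \text{ a finitely generated subgroup of } G\}$ if this maximum exists, and $r(G)=\infty$ otherwise. *)

theory Defs
  imports "HOL-Algebra.Algebra"
begin

text \<open>Words in letters of a set S and their inverses: a letter (True, s) stands for s,
  (False, s) for the inverse of s.\<close>

fun reduced_word :: "(bool \<times> 'a) list \<Rightarrow> bool" where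
  "reduced_word [] = True"
| "reduced_word [_] = True"
| "reduced_word ((b, s) # (c, t) # w) = (\<not> (s = t \<and> b \<noteq> c) \<and> reduced_word ((c, t) # w))"

definition eval_word :: "('a, 'm) monoid_scheme \<Rightarrow> (bool \<times> 'a) list \<Rightarrow> 'a" where
  "eval_word G w = foldr (\<lambda>(b, s) y. (if b then s else inv\<^bsub>G\<^esub> s) \<otimes>\<^bsub>G\<^esub> y) w \<one>\<^bsub>G\<^esub>"

definition free_basis :: "('a, 'm) monoid_scheme \<Rightarrow> 'a set \<Rightarrow> bool" where
  "free_basis G S \<longleftrightarrow> S \<subseteq> carrier G \<and>
     (\<forall>w. w \<noteq> [] \<and> reduced_word w \<and> set (map snd w) \<subseteq> S \<longrightarrow> eval_word G w \<noteq> \<one>\<^bsub>G\<^esub>)"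

definition free_subgroup :: "('a, 'm) monoid_scheme \<Rightarrow> 'a set \<Rightarrow> bool" where
  "free_subgroup G F \<longleftrightarrow> (\<exists>S. free_basis G S \<and> generate G S = F)"

definition free_subgroup_rank :: "('a, 'm) monoid_scheme \<Rightarrow> 'a set \<Rightarrow> nat \<Rightarrow> bool" where
  "free_subgroup_rank G F m \<longleftrightarrow>
     (\<exists>S. free_basis G S \<and> generate G S = F \<and> finite S \<and> card S = m)"

definition fg_subgroup :: "('a, 'm) monoid_scheme \<Rightarrow> 'a set \<Rightarrow> bool" where
  "fg_subgroup G H \<longleftrightarrow> (\<exists>T. finite T \<and> T \<subseteq> carrier G \<and> H = generate G T)"

definition locally_free :: "('a, 'm) monoid_scheme \<Rightarrow> bool" where
  "locally_free G \<longleftrightarrow> group G \<and> (\<forall>H. fg_subgroup G H \<longrightarrow> free_subgroup G H)"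

definition mu :: "('a, 'm) monoid_scheme \<Rightarrow> 'a set \<Rightarrow> nat" where
  "mu G H = (LEAST m. 0 < m \<and> (\<exists>F. free_subgroup_rank G F m \<and> H \<subseteq> F))"

definition rank_infinite :: "('a, 'm) monoid_scheme \<Rightarrow> bool" where
  "rank_infinite G \<longleftrightarrow>
     \<not> (\<exists>M \<in> {mu G H | H. fg_subgroup G H}. \<forall>k \<in> {mu G H | H. fg_subgroup G H}. k \<le> M)"

text \<open>Internal free product: K is the subgroup generated by subgroups A and B and the
  natural map A * B \<rightarrow> K is an isomorphism, i.e. no nonempty alternating word with
  nontrivial letters from A and B evaluates to the identity (normal form theorem).
  A letter (True, a) is taken from A, (False, b) from B.\<close>

fun alternating :: "(bool \<times> 'a) list \<Rightarrow> bool" where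
  "alternating [] = True"
| "alternating [_] = True"
| "alternating ((b, _) # (c, y) # w) = (b \<noteq> c \<and> alternating ((c, y) # w))"

definition internal_free_product ::
  "('a, 'm) monoid_scheme \<Rightarrow> 'a set \<Rightarrow> 'a set \<Rightarrow> 'a set \<Rightarrow> bool" where
  "internal_free_product G K A B \<longleftrightarrow>
     subgroup A G \<and> subgroup B G \<and> K = generate G (A \<union> B) \<and>
     (\<forall>w. w \<noteq> [] \<and> alternating w \<and>
          (\<forall>(b, y) \<in> set w. y \<noteq> \<one>\<^bsub>G\<^esub> \<and> (if b then y \<in> A else y \<in> B))
          \<longrightarrow> foldr (\<lambda>(b, y) z. y \<otimes>\<^bsub>G\<^esub> z) w \<one>\<^bsub>G\<^esub> \<noteq> \<one>\<^bsub>G\<^esub>)"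

end

theory Submission
  imports Defs "HOL-Combinatorics.Permutations" "HOL-Algebra.Sym_Groups"
begin


definition rp :: "bool \<times> 'a \<Rightarrow> bool \<times> 'a \<Rightarrow> bool" where
  "rp x y \<longleftrightarrow> \<not> (snd x = snd y \<and> fst x \<noteq> fst y)"

definition mapl :: "('a \<Rightarrow> 'b) \<Rightarrow> (bool \<times> 'a) list \<Rightarrow> (bool \<times> 'b) list" where
  "mapl f w = map (\<lambda>(b, s). (b, f s)) w"

definition winv :: "(bool \<times> 'a) list \<Rightarrow> (bool \<times> 'a) list" where
  "winv w = rev (map (\<lambda>(b, s). (\<not> b, s)) w)"

definition syms :: "(bool \<times> 'a) list \<Rightarrow> 'a set" where
  "syms w = set (map snd w)"

lemma syms_simps[simp]: "syms [] = {}" "syms (x # w) = insert (snd x) (syms w)"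
  "syms (v @ w) = syms v \<union> syms w"
  by (auto simp: syms_def)

lemma syms_mapl[simp]: "syms (mapl f w) = f ` syms w"
  by (force simp: syms_def mapl_def)

lemma syms_winv[simp]: "syms (winv w) = syms w"
  by (force simp: syms_def winv_def)

lemma mapl_simps[simp]: "mapl f [] = []" "mapl f ((b, s) # w) = (b, f s) # mapl f w"
  "mapl f (v @ w) = mapl f v @ mapl f w"
  by (auto simp: mapl_def)

lemma mapl_mapl[simp]: "mapl f (mapl g w) = mapl (f \<circ> g) w"
  by (induct w) (auto simp: mapl_def)

lemma mapl_cong: "(\<And>s. s \<in> syms w \<Longrightarrow> f s = g s) \<Longrightarrow> mapl f w = mapl g w"
  by (induct w) (auto simp: mapl_def syms_def)

lemma mapl_id: "mapl (\<lambda>x. x) w = w"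
  by (induct w) (auto simp: mapl_def)

lemma mapl_winv: "mapl f (winv w) = winv (mapl f w)"
  by (simp add: mapl_def winv_def rev_map case_prod_beta comp_def)

lemma winv_simps[simp]: "winv [] = []" "winv ((b, s) # w) = winv w @ [(\<not> b, s)]"
  by (auto simp: winv_def)

lemma length_mapl[simp]: "length (mapl f w) = length w"
  by (simp add: mapl_def)

lemma reduced_word_succ: "reduced_word w \<longleftrightarrow> successively rp w"
  by (induct w rule: reduced_word.induct) (auto simp: rp_def)

lemma eval_word_simps[simp]: "eval_word G [] = \<one>\<^bsub>G\<^esub>"
  "eval_word G ((b, s) # w) = (if b then s else inv\<^bsub>G\<^esub> s) \<otimes>\<^bsub>G\<^esub> eval_word G w"
  by (auto simp: eval_word_def)

context group begin

lemma eval_word_carrier: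
  "syms w \<subseteq> carrier G \<Longrightarrow> eval_word G w \<in> carrier G"
  by (induct w) auto

lemma eval_word_append:
  assumes "syms v \<subseteq> carrier G" "syms w \<subseteq> carrier G"
  shows "eval_word G (v @ w) = eval_word G v \<otimes> eval_word G w"
  using assms(1)
proof (induct v)
  case Nil
  then show ?case using assms eval_word_carrier by auto
next
  case (Cons x v)
  obtain b s where x: "x = (b, s)" by force
  have s: "s \<in> carrier G" using Cons x by auto
  then show ?case using Cons x assms eval_word_carrier
    by (auto simp: m_assoc)
qed

lemma eval_word_winv:
  assumes "syms w \<subseteq> carrier G"
  shows "eval_word G (winv w) = inv eval_word G w"
  using assms
proof (induct w)
  case Nil
  then show ?case by simp
next
  case (Cons x w)
  obtain b s where x: "x = (b, s)" by force
  have s: "s \<in> carrier G" using Cons x by auto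
  have ew: "eval_word G w \<in> carrier G" using Cons eval_word_carrier by auto
  have "eval_word G (winv (x # w)) = eval_word G (winv w) \<otimes> eval_word G [(\<not> b, s)]"
    using x Cons s by (simp only: winv_simps, subst eval_word_append) auto
  also have "\<dots> = inv (eval_word G ((b,s) # w))"
    using Cons x s ew by (auto simp: inv_mult_group)
  finally show ?case using x by simp
qed

end

fun red :: "(bool \<times> 'a) list \<Rightarrow> (bool \<times> 'a) list" where
  "red [] = []"
| "red (x # w) = (case red w of [] \<Rightarrow> [x]
     | y # v \<Rightarrow> (if snd x = snd y \<and> fst x \<noteq> fst y then v else x # y # v))"

lemma red_syms: "syms (red w) \<subseteq> syms w"
  by (induct w) (auto split: list.splits if_splits)

lemma red_reduced: "successively rp (red w)"
proof (induct w)
  case Nil then show ?case by simp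
next
  case (Cons x w)
  show ?case
  proof (cases "red w")
    case Nil then show ?thesis by simp
  next
    case (Cons y v)
    then have yv: "successively rp (y # v)" using Cons.hyps by simp
    then have "successively rp v" by (cases v) auto
    then show ?thesis using Cons yv by (auto simp: rp_def)
  qed
qed

lemma rp_flip: "(\<lambda>x y. rp ((\<lambda>(b, s). (\<not> b, s)) y) ((\<lambda>(b, s). (\<not> b, s)) x)) = rp"
  by (auto simp: fun_eq_iff rp_def)

lemma succ_winv: "successively rp (winv w) \<longleftrightarrow> successively rp w"
  unfolding winv_def successively_rev successively_map rp_flip ..

lemma succ_mapl:
  assumes "inj_on f (syms w)" shows "successively rp (mapl f w) \<longleftrightarrow> successively rp w"
  using assms
proof (induct w)
  case Nil then show ?case by simp
next
  case (Cons x w)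
  note IH = Cons.hyps and pr = Cons.prems
  show ?case
  proof (cases w)
    case Nil then show ?thesis by (cases x) simp
  next
    case (Cons y v)
    have "f (snd x) = f (snd y) \<longleftrightarrow> snd x = snd y"
    proof -
      have "snd x \<in> syms (x # w)" "snd y \<in> syms (x # w)" using Cons by auto
      then show ?thesis by (rule inj_on_eq_iff[OF pr])
    qed
    then have "rp (fst x, f (snd x)) (fst y, f (snd y)) \<longleftrightarrow> rp x y"
      by (simp add: rp_def)
    moreover have "inj_on f (syms w)" using pr by (auto intro: inj_on_subset)
    ultimately show ?thesis using IH Cons
      by (cases x; cases y) (simp add: successively_Cons)
  qed
qed

context group begin

lemma eval_red:
  assumes "f ` syms w \<subseteq> carrier G"
  shows "eval_word G (mapl f (red w)) = eval_word G (mapl f w)"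
  using assms
proof (induct w)
  case Nil then show ?case by simp
next
  case (Cons x w)
  obtain b s where x: "x = (b, s)" by force
  have fs: "f s \<in> carrier G" using Cons x by auto
  have IH: "eval_word G (mapl f (red w)) = eval_word G (mapl f w)" using Cons by auto
  have fr: "f ` syms (red w) \<subseteq> carrier G" using Cons red_syms by fastforce
  show ?case
  proof (cases "red w")
    case Nil
    then show ?thesis using IH x by simp
  next
    case (Cons y v)
    obtain c t where y: "y = (c, t)" by force
    have ft: "f t \<in> carrier G" and fv: "f ` syms v \<subseteq> carrier G" using fr Cons y by auto
    have ev: "eval_word G (mapl f v) \<in> carrier G" using fv eval_word_carrier by auto
    show ?thesis
    proof (cases "s = t \<and> b \<noteq> c")
      case True
      then have "eval_word G (mapl f (red (x # w))) = eval_word G (mapl f v)"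
        using Cons x y by simp
      also have "\<dots> = (if b then f s else inv f s) \<otimes> eval_word G (mapl f (y # v))"
        using True y fs ev by (cases b) (auto simp: m_assoc[symmetric])
      also have "\<dots> = eval_word G (mapl f (x # w))"
        using IH Cons x y by simp
      finally show ?thesis .
    next
      case False
      then have "red (x # w) = x # red w" using Cons x y by simp
      then show ?thesis using x IH by simp
    qed
  qed
qed

lemma generate_word:
  assumes "S \<subseteq> carrier G" "g \<in> generate G S"
  shows "\<exists>w. syms w \<subseteq> S \<and> successively rp w \<and> eval_word G w = g"
proof -
  have "\<exists>w. syms w \<subseteq> S \<and> eval_word G w = g"
    using assms(2)
  proof (induct rule: generate.induct)
    case one
    then show ?case by (intro exI[of _ "[]"]) auto
  next
    case (incl h)
    then show ?case using assms(1) by (intro exI[of _ "[(True, h)]"]) auto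
  next
    case (inv h)
    then show ?case using assms(1) by (intro exI[of _ "[(False, h)]"]) auto
  next
    case (eng h1 h2)
    then obtain w1 w2 where "syms w1 \<subseteq> S" "eval_word G w1 = h1" "syms w2 \<subseteq> S" "eval_word G w2 = h2"
      by auto
    then show ?case using assms(1) by (intro exI[of _ "w1 @ w2"]) (auto simp: eval_word_append)
  qed
  then obtain w where w: "syms w \<subseteq> S" "eval_word G w = g" by auto
  have "eval_word G (mapl (\<lambda>x. x) (red w)) = eval_word G (mapl (\<lambda>x. x) w)"
    using w assms(1) by (intro eval_red) auto
  then show ?thesis using w red_syms[of w] red_reduced
    by (intro exI[of _ "red w"]) (auto simp: mapl_id)
qed

lemma word_generate:
  assumes "S \<subseteq> carrier G" "syms w \<subseteq> S"
  shows "eval_word G w \<in> generate G S"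
  using assms(2)
proof (induct w)
  case Nil then show ?case by (simp add: generate.one)
next
  case (Cons x w)
  obtain b s where x: "x = (b, s)" by force
  have "s \<in> S" using Cons x by auto
  then have "(if b then s else inv s) \<in> generate G S"
    by (auto intro: generate.incl generate.inv)
  then show ?case using Cons x by (auto intro: generate.eng)
qed

end




context group begin

lemma free_basisD:
  "free_basis G S \<Longrightarrow> w \<noteq> [] \<Longrightarrow> successively rp w \<Longrightarrow> syms w \<subseteq> S \<Longrightarrow> eval_word G w \<noteq> \<one>"
  by (auto simp: free_basis_def reduced_word_succ syms_def)

lemma free_basis_carrier: "free_basis G S \<Longrightarrow> S \<subseteq> carrier G"
  by (simp add: free_basis_def)

lemma free_unique:
  assumes fb: "free_basis G S"
  shows "successively rp v \<Longrightarrow> successively rp w \<Longrightarrow> syms v \<subseteq> S \<Longrightarrow> syms w \<subseteq> S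
    \<Longrightarrow> eval_word G v = eval_word G w \<Longrightarrow> v = w"
proof (induct v arbitrary: w)
  case Nil
  then show ?case using free_basisD[OF fb, of w] by auto
next
  case (Cons x v)
  have Sc: "S \<subseteq> carrier G" using fb free_basis_carrier by auto
  show ?case
  proof (cases w)
    case Nil
    then show ?thesis using Cons.prems free_basisD[OF fb, of "x # v"] by auto
  next
    case (Cons y w')
    note w = this
    obtain b s where x: "x = (b, s)" by force
    have s: "s \<in> carrier G" using Cons.prems x Sc by auto
    have xc: "(if b then s else inv s) \<in> carrier G" using s by auto
    have evc: "eval_word G v \<in> carrier G" "eval_word G w' \<in> carrier G"
      using Cons.prems w Sc by (auto intro!: eval_word_carrier)
    show ?thesis
    proof (cases "x = y")
      case True
      then have "(if b then s else inv s) \<otimes> eval_word G v = (if b then s else inv s) \<otimes> eval_word G w'"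
        using Cons.prems(5) unfolding w True[symmetric] x by simp
      then have "eval_word G v = eval_word G w'"
        using xc evc by (metis Units_eq Units_l_cancel)
      moreover have "successively rp v" "successively rp w'"
        using Cons.prems w by (auto simp: successively_Cons)
      ultimately have "v = w'" using Cons.prems w by (intro Cons.hyps) auto
      then show ?thesis using True w by simp
    next
      case False
      obtain c t where y: "y = (c, t)" by force
      let ?W = "winv w @ x # v"
      have "successively rp (winv w)" using succ_winv Cons.prems by auto
      moreover have "winv w = winv w' @ [(\<not> c, t)]" using w y by simp
      moreover have "rp (\<not> c, t) x" using False x y by (auto simp: rp_def)
      ultimately have "successively rp ?W" using Cons.prems
        by (simp add: successively_append_iff)
      moreover have "syms ?W \<subseteq> S" using Cons.prems by auto
      moreover have "eval_word G ?W = \<one>"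
      proof -
        have c1: "syms (winv w) \<subseteq> carrier G" "syms (x # v) \<subseteq> carrier G" "syms w \<subseteq> carrier G"
          using Cons.prems Sc by auto
        have "eval_word G ?W = inv (eval_word G w) \<otimes> eval_word G (x # v)"
          using c1 by (simp only: eval_word_append eval_word_winv)
        also have "\<dots> = \<one>"
        proof -
          have "eval_word G (x # v) = eval_word G w" using Cons.prems by simp
          then show ?thesis using c1 eval_word_carrier[of w] by simp
        qed
        finally show ?thesis .
      qed
      ultimately show ?thesis using free_basisD[OF fb, of ?W] by auto
    qed
  qed
qed

definition nf :: "'a set \<Rightarrow> 'a \<Rightarrow> (bool \<times> 'a) list" where
  "nf S g = (THE w. syms w \<subseteq> S \<and> successively rp w \<and> eval_word G w = g)"

definition phi :: "'a set \<Rightarrow> ('c, 'd) monoid_scheme \<Rightarrow> ('a \<Rightarrow> 'c) \<Rightarrow> 'a \<Rightarrow> 'c" where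
  "phi S H f g = eval_word H (mapl f (nf S g))"

lemma nf_red:
  assumes fb: "free_basis G S" and w: "syms w \<subseteq> S"
  shows "nf S (eval_word G w) = red w"
proof -
  have Sc: "S \<subseteq> carrier G" using fb free_basis_carrier by auto
  have r: "syms (red w) \<subseteq> S" "successively rp (red w)" using red_syms[of w] red_reduced w by auto
  have e: "eval_word G (red w) = eval_word G w"
    using eval_red[of "\<lambda>x. x" w] w Sc by (auto simp: mapl_id)
  show ?thesis unfolding nf_def
  proof (rule the1_equality)
    show "syms (red w) \<subseteq> S \<and> successively rp (red w) \<and> eval_word G (red w) = eval_word G w"
      using r e by simp
    then show "\<exists>!u. syms u \<subseteq> S \<and> successively rp u \<and> eval_word G u = eval_word G w"
    proof (rule ex1I)
      fix u assume "syms u \<subseteq> S \<and> successively rp u \<and> eval_word G u = eval_word G w"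
      then show "u = red w" using free_unique[OF fb, of u "red w"] r e by simp
    qed
  qed
qed

lemma phi_word:
  assumes fb: "free_basis G S" and H: "group H" and f: "f ` S \<subseteq> carrier H" and w: "syms w \<subseteq> S"
  shows "phi S H f (eval_word G w) = eval_word H (mapl f w)"
  unfolding phi_def nf_red[OF fb w]
  by (rule group.eval_red[OF H]) (use f w in auto)

lemma phi_basis:
  assumes fb: "free_basis G S" and H: "group H" and f: "f ` S \<subseteq> carrier H" and s: "s \<in> S"
  shows "phi S H f s = f s"
proof -
  have sc: "s \<in> carrier G" using fb free_basis_carrier s by auto
  have "phi S H f (eval_word G [(True, s)]) = eval_word H (mapl f [(True, s)])"
    using s by (intro phi_word[OF fb H f]) auto
  moreover have "eval_word G [(True, s)] = s" using sc by simp
  moreover have "eval_word H (mapl f [(True, s)]) = f s"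
    using f s by (simp add: monoid.r_one[OF group.is_monoid[OF H]] image_subset_iff)
  ultimately show ?thesis by simp
qed

lemma phi_props:
  assumes fb: "free_basis G S" and H: "group H" and f: "f ` S \<subseteq> carrier H"
    and x: "x \<in> generate G S" and y: "y \<in> generate G S"
  shows "phi S H f (x \<otimes> y) = phi S H f x \<otimes>\<^bsub>H\<^esub> phi S H f y"
    "phi S H f (inv x) = inv\<^bsub>H\<^esub> phi S H f x"
    "phi S H f x \<in> carrier H"
proof -
  have Sc: "S \<subseteq> carrier G" using fb free_basis_carrier by auto
  obtain u where u: "syms u \<subseteq> S" "eval_word G u = x" using generate_word[OF Sc x] by auto
  obtain v where v: "syms v \<subseteq> S" "eval_word G v = y" using generate_word[OF Sc y] by auto
  have fu: "f ` syms u \<subseteq> carrier H" "f ` syms v \<subseteq> carrier H" using u v f by auto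
  have "phi S H f (x \<otimes> y) = phi S H f (eval_word G (u @ v))"
    using u v Sc by (simp add: eval_word_append)
  also have "\<dots> = eval_word H (mapl f u) \<otimes>\<^bsub>H\<^esub> eval_word H (mapl f v)"
    using u v fu by (simp add: phi_word[OF fb H f] group.eval_word_append[OF H])
  moreover have "phi S H f x = eval_word H (mapl f u)" "phi S H f y = eval_word H (mapl f v)"
    using phi_word[OF fb H f u(1)] phi_word[OF fb H f v(1)] u v by auto
  ultimately show "phi S H f (x \<otimes> y) = phi S H f x \<otimes>\<^bsub>H\<^esub> phi S H f y"
    by simp
  have "phi S H f (inv x) = phi S H f (eval_word G (winv u))"
    using u Sc by (simp add: eval_word_winv)
  also have "\<dots> = inv\<^bsub>H\<^esub> eval_word H (mapl f u)"
    using u fu by (simp add: phi_word[OF fb H f] mapl_winv group.eval_word_winv[OF H])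
  moreover have "phi S H f x = eval_word H (mapl f u)"
    using phi_word[OF fb H f u(1)] u by auto
  ultimately show "phi S H f (inv x) = inv\<^bsub>H\<^esub> phi S H f x"
    by simp
  show "phi S H f x \<in> carrier H"
    using u fu phi_word[OF fb H f u(1)] group.eval_word_carrier[OF H, of "mapl f u"] by simp
qed

lemma phi_gen_word:
  assumes fb: "free_basis G S" and H: "group H" and f: "f ` S \<subseteq> carrier H"
    and w: "syms w \<subseteq> generate G S"
  shows "phi S H f (eval_word G w) = eval_word H (mapl (phi S H f) w)"
  using w
proof (induct w)
  case Nil
  have "phi S H f (eval_word G []) = eval_word H []"
    using phi_word[OF fb H f, of "[]"] by simp
  then show ?case by simp
next
  case (Cons x w)
  obtain b s where x: "x = (b, s)" by force
  have Sc: "S \<subseteq> carrier G" using fb free_basis_carrier by auto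
  have s: "s \<in> generate G S" using Cons x by auto
  have ew: "eval_word G w \<in> generate G S"
  proof -
    have "eval_word G w \<in> generate G (generate G S)"
      using Cons x by (intro word_generate generate_incl[OF Sc]) auto
    moreover have "generate G (generate G S) \<subseteq> generate G S"
      by (rule generate_subgroup_incl[OF order_refl generate_is_subgroup[OF Sc]])
    ultimately show ?thesis by auto
  qed
  have si: "inv s \<in> generate G S" using generate_m_inv_closed[OF Sc s] .
  have pw: "phi S H f (eval_word G w) = eval_word H (mapl (phi S H f) w)"
    using Cons by auto
  show ?case
  proof (cases b)
    case True
    then show ?thesis using x s ew pw by (simp add: phi_props(1)[OF fb H f])
  next
    case False
    then show ?thesis using x s ew si pw by (simp add: phi_props[OF fb H f])
  qed
qed

end




lemma extend_perm:
  assumes XX: "finite XX" and R: "R \<subseteq> Sigma XX (\<lambda>_. XX)" and sv: "single_valued R" and sv2: "single_valued (converse R)"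
  shows "\<exists>p. p permutes XX \<and> (\<forall>(a, b) \<in> R. p a = b)"
proof -
  define D where "D = Domain R"
  define Rg where "Rg = Range R"
  define f where "f a = (THE b. (a, b) \<in> R)" for a
  have fab: "f a = b" if "(a, b) \<in> R" for a b
    unfolding f_def using that sv by (auto simp: single_valued_def)
  have DX: "D \<subseteq> XX" "Rg \<subseteq> XX" using R by (auto simp: D_def Rg_def)
  have inj: "inj_on f D"
  proof (rule inj_onI)
    fix a1 a2 assume "a1 \<in> D" "a2 \<in> D" "f a1 = f a2"
    then obtain b1 b2 where "(a1, b1) \<in> R" "(a2, b2) \<in> R" "b1 = b2"
      unfolding D_def using fab by force
    then show "a1 = a2" using sv2 by (auto simp: single_valued_def)
  qed
  have img: "f ` D = Rg" unfolding D_def Rg_def using fab by force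
  have bij1: "bij_betw f D Rg" using inj img by (simp add: bij_betw_def)
  have cD: "card D = card Rg" using bij1 bij_betw_same_card by blast
  have "card (XX - D) = card (XX - Rg)"
    using DX XX cD by (simp add: card_Diff_subset finite_subset)
  then obtain h where h: "bij_betw h (XX - D) (XX - Rg)"
    using finite_same_card_bij XX by (meson finite_Diff)
  define p where "p x = (if x \<in> D then f x else if x \<in> XX then h x else x)" for x
  have "bij_betw p D Rg" using bij1 by (rule bij_betw_cong[THEN iffD1, rotated]) (simp add: p_def)
  moreover have "bij_betw p (XX - D) (XX - Rg)"
    using h by (rule bij_betw_cong[THEN iffD1, rotated]) (simp add: p_def)
  ultimately have "bij_betw p (D \<union> (XX - D)) (Rg \<union> (XX - Rg))"
    by (rule bij_betw_combine) auto
  moreover have "D \<union> (XX - D) = XX" "Rg \<union> (XX - Rg) = XX" using DX by auto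
  ultimately have "bij_betw p XX XX" by simp
  then have "p permutes XX" by (rule bij_imp_permutes) (use DX in \<open>auto simp: p_def\<close>)
  moreover have "\<forall>(a, b) \<in> R. p a = b" using fab by (auto simp: p_def D_def)
  ultimately show ?thesis by blast
qed

lemma eval_sym_path:
  assumes "syms u \<subseteq> carrier (sym_group n)"
    and "\<And>i. i < length u \<Longrightarrow> (if fst (u ! i) then snd (u ! i) else inv' (snd (u ! i))) (k + i + 2) = k + i + 1"
  shows "eval_word (sym_group n) u (k + length u + 1) = k + 1"
  using assms
proof (induct u arbitrary: k)
  case Nil
  then show ?case by (simp add: sym_group_one)
next
  case (Cons x u)
  obtain b p where x: "x = (b, p)" by force
  have p: "p \<in> carrier (sym_group n)" using Cons x by auto
  have IH: "eval_word (sym_group n) u (Suc k + length u + 1) = Suc k + 1"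
  proof (rule Cons.hyps)
    show "syms u \<subseteq> carrier (sym_group n)" using Cons by auto
    fix i assume "i < length u"
    then show "(if fst (u ! i) then snd (u ! i) else inv' (snd (u ! i))) (Suc k + i + 2) = Suc k + i + 1"
    proof -
      have e: "(x # u) ! Suc i = u ! i" by simp
      show ?thesis using Cons.prems(2)[of "Suc i"] \<open>i < length u\<close> unfolding e by simp
    qed
  qed
  have x0: "(b \<longrightarrow> p (k + 2) = k + 1) \<and> (\<not> b \<longrightarrow> inv' p (k + 2) = k + 1)"
  proof -
    have e: "(x # u) ! 0 = (b, p)" using x by simp
    show ?thesis using Cons.prems(2)[of 0] unfolding e by (cases b) simp_all
  qed
  show ?case using IH x0 x p by (cases b) (simp_all add: sym_group_mult)
qed

lemma residual:
  fixes w :: "(bool \<times> 'a) list"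
  assumes ne: "w \<noteq> []" and red: "successively rp w"
  shows "\<exists>n g. (\<forall>s. g s \<in> carrier (sym_group n)) \<and> eval_word (sym_group n) (mapl g w) \<noteq> \<one>\<^bsub>sym_group n\<^esub>"
proof -
  define L where "L = length w"
  define XX where "XX = {1..L+1}"
  define R where "R s = {(i + 2, i + 1) | i. i < L \<and> w ! i = (True, s)} \<union>
                         {(i + 1, i + 2) | i. i < L \<and> w ! i = (False, s)}" for s
  have rpn: "rp (w ! i) (w ! Suc i)" if "Suc i < L" for i
    using successively_nth[OF red] that L_def by simp
  have ex: "\<exists>p. p permutes XX \<and> (\<forall>(a, b) \<in> R s. p a = b)" for s
  proof (rule extend_perm)
    show "finite XX" by (simp add: XX_def)
    show "R s \<subseteq> XX \<times> XX" by (auto simp: R_def XX_def)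
    show "single_valued (R s)"
    proof (rule single_valuedI)
      fix a b c assume "(a, b) \<in> R s" "(a, c) \<in> R s"
      then show "b = c"
        unfolding R_def using rpn by (auto simp: rp_def) (metis fst_conv snd_conv)+
    qed
    show "single_valued (converse (R s))"
    proof (rule single_valuedI)
      fix a b c assume "(a, b) \<in> converse (R s)" "(a, c) \<in> converse (R s)"
      then show "b = c"
        unfolding R_def using rpn by (auto simp: rp_def) (metis fst_conv snd_conv)+
    qed
  qed
  define g where "g s = (SOME p. p permutes XX \<and> (\<forall>(a, b) \<in> R s. p a = b))" for s
  have g: "g s permutes XX" "\<And>a b. (a, b) \<in> R s \<Longrightarrow> g s a = b" for s
    using someI_ex[OF ex[of s]] unfolding g_def by auto
  have gc: "g s \<in> carrier (sym_group (L + 1))" for s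
    using g(1) by (simp add: sym_group_carrier XX_def)
  have "eval_word (sym_group (L + 1)) (mapl g w) (0 + length (mapl g w) + 1) = 0 + 1"
  proof (rule eval_sym_path)
    show "syms (mapl g w) \<subseteq> carrier (sym_group (L + 1))" using gc by auto
    fix i assume i: "i < length (mapl g w)"
    obtain b s where bs: "w ! i = (b, s)" by force
    have mi: "mapl g w ! i = (b, g s)" using i bs by (simp add: mapl_def)
    show "(if fst (mapl g w ! i) then snd (mapl g w ! i) else inv' (snd (mapl g w ! i))) (0 + i + 2) = 0 + i + 1"
    proof (cases b)
      case True
      then have "(i + 2, i + 1) \<in> R s" using i bs by (auto simp: R_def L_def)
      then show ?thesis using mi True g(2) by simp
    next
      case False
      then have "(i + 1, i + 2) \<in> R s" using i bs by (auto simp: R_def L_def)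
      then have "g s (i + 1) = i + 2" using g(2) by simp
      then have "inv' (g s) (i + 2) = i + 1" using permutes_inverses(2)[OF g(1)] by metis
      then show ?thesis using mi False by simp
    qed
  qed
  moreover have "length (mapl g w) = L" by (simp add: L_def)
  moreover have "L \<noteq> 0" using ne L_def by simp
  ultimately have "eval_word (sym_group (L + 1)) (mapl g w) \<noteq> id" by (metis add_0 id_apply add_cancel_left_left)
  then show ?thesis using gc by (intro exI[of _ "L + 1"] exI[of _ g]) (simp add: sym_group_one)
qed




lemma card_sym2: "card (carrier (sym_group 2)) = 2"
proof -
  have "card {p. p permutes {1..(2::nat)}} = fact 2"
    by (rule card_permutations) auto
  then show ?thesis by (simp add: sym_group_def)
qed

context group begin

lemma phi_one:
  assumes fb: "free_basis G S" and H: "group H" and f: "f ` S \<subseteq> carrier H"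
  shows "phi S H f \<one> = \<one>\<^bsub>H\<^esub>"
  using phi_word[OF fb H f, of "[]"] by simp

lemma phi_agree:
  assumes fb: "free_basis G S" and H: "group H" and f: "f ` S \<subseteq> carrier H" and g: "g ` S \<subseteq> carrier H"
    and T: "T \<subseteq> carrier G" and gen: "generate G T = generate G S"
    and agree: "\<And>t. t \<in> T \<Longrightarrow> phi S H f t = phi S H g t" and s: "s \<in> S"
  shows "f s = g s"
proof -
  have "s \<in> generate G T" using gen s by (simp add: generate.incl)
  then obtain w where w: "syms w \<subseteq> T" "eval_word G w = s" using generate_word[OF T] by blast
  have wS: "syms w \<subseteq> generate G S" using w gen generate.incl[of _ T G] by blast
  have "f s = phi S H f s" using phi_basis[OF fb H f s] by simp
  also have "\<dots> = eval_word H (mapl (phi S H f) w)" using phi_gen_word[OF fb H f wS] w by simp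
  also have "\<dots> = eval_word H (mapl (phi S H g) w)" using w agree by (intro arg_cong[where f="eval_word H"] mapl_cong) auto
  also have "\<dots> = phi S H g s" using phi_gen_word[OF fb H g wS] w by simp
  also have "\<dots> = g s" using phi_basis[OF fb H g s] by simp
  finally show ?thesis .
qed

lemma rank_bound:
  assumes fb: "free_basis G S" and T: "T \<subseteq> carrier G" "finite T" and gen: "generate G T = generate G S"
  shows "finite S \<and> card S \<le> card T"
proof -
  have sub: "card S' \<le> card T" if S': "finite S'" "S' \<subseteq> S" for S'
  proof -
    define Q where "Q = sym_group 2"
    have Q: "group Q" unfolding Q_def by (rule sym_group_is_group)
    have cQ: "card (carrier Q) = 2" unfolding Q_def by (rule card_sym2)
    have finQ: "finite (carrier Q)" using cQ card.infinite by fastforce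
    define ext where "ext h = (\<lambda>s. if s \<in> S' then h s else \<one>\<^bsub>Q\<^esub>)" for h
    define Phi where "Phi h = restrict (phi S Q (ext h)) T" for h
    have ec: "ext h ` S \<subseteq> carrier Q" if "h \<in> S' \<rightarrow>\<^sub>E carrier Q" for h
      using that group.subgroupE(2)[OF Q] by (auto simp: ext_def intro: monoid.one_closed[OF group.is_monoid[OF Q]])
    have "inj_on Phi (S' \<rightarrow>\<^sub>E carrier Q)"
    proof (rule inj_onI)
      fix h1 h2 assume h: "h1 \<in> S' \<rightarrow>\<^sub>E carrier Q" "h2 \<in> S' \<rightarrow>\<^sub>E carrier Q" "Phi h1 = Phi h2"
      have "\<And>t. t \<in> T \<Longrightarrow> phi S Q (ext h1) t = phi S Q (ext h2) t"
        using h(3) unfolding Phi_def by (metis restrict_apply')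
      then have "ext h1 s = ext h2 s" if "s \<in> S" for s
        using phi_agree[OF fb Q ec[OF h(1)] ec[OF h(2)] T(1) gen] that by blast
      then have "h1 s = h2 s" if "s \<in> S'" for s
      proof -
        have "s \<in> S" using that S'(2) by blast
        then have "ext h1 s = ext h2 s" by fact
        then show ?thesis using that by (simp add: ext_def)
      qed
      then show "h1 = h2" by (intro PiE_ext[OF h(1,2)])
    qed
    moreover have "Phi ` (S' \<rightarrow>\<^sub>E carrier Q) \<subseteq> T \<rightarrow>\<^sub>E carrier Q"
    proof
      fix y assume "y \<in> Phi ` (S' \<rightarrow>\<^sub>E carrier Q)"
      then obtain h where h: "h \<in> S' \<rightarrow>\<^sub>E carrier Q" "y = Phi h" by blast
      have "phi S Q (ext h) t \<in> carrier Q" if "t \<in> T" for t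
        using phi_props(3)[OF fb Q ec[OF h(1)]] that gen generate.incl[of t T G] by auto
      then show "y \<in> T \<rightarrow>\<^sub>E carrier Q" using h by (auto simp: Phi_def)
    qed
    moreover have "finite (T \<rightarrow>\<^sub>E carrier Q)" using T(2) finQ by (simp add: finite_PiE)
    ultimately have "card (S' \<rightarrow>\<^sub>E carrier Q) \<le> card (T \<rightarrow>\<^sub>E carrier Q)"
      by (rule card_inj_on_le)
    then have "(2::nat) ^ card S' \<le> 2 ^ card T" using S'(1) T(2) cQ by (simp add: card_PiE)
    then show ?thesis by simp
  qed
  have "finite S"
  proof (rule ccontr)
    assume "infinite S"
    then obtain S' where "finite S'" "card S' = Suc (card T)" "S' \<subseteq> S"
      using infinite_arbitrarily_large by blast
    then have "Suc (card T) \<le> card T" using sub by metis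
    then show False by simp
  qed
  then show ?thesis using sub by blast
qed

lemma hopf:
  assumes fb: "free_basis G S" and fin: "finite S" and T: "T \<subseteq> carrier G" "finite T"
    and cT: "card T = card S" and gen: "generate G T = generate G S"
  shows "free_basis G T"
proof (rule ccontr)
  assume nfb: "\<not> free_basis G T"
  have "\<exists>w. w \<noteq> [] \<and> reduced_word w \<and> set (map snd w) \<subseteq> T \<and> eval_word G w = \<one>"
    using nfb T(1) unfolding free_basis_def by blast
  then obtain w where w: "w \<noteq> []" "successively rp w" "syms w \<subseteq> T" "eval_word G w = \<one>"
    unfolding reduced_word_succ syms_def by blast
  have Sc: "S \<subseteq> carrier G" using fb free_basis_carrier by auto
  obtain \<sigma> where \<sigma>: "bij_betw \<sigma> S T" using finite_same_card_bij[OF fin T(2) cT[symmetric]] by blast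
  define \<tau> where "\<tau> = the_inv_into S \<sigma>"
  have \<tau>: "bij_betw \<tau> T S" unfolding \<tau>_def by (rule bij_betw_the_inv_into[OF \<sigma>])
  have st: "\<sigma> (\<tau> t) = t" if "t \<in> T" for t
    unfolding \<tau>_def using f_the_inv_into_f_bij_betw[OF \<sigma> that] .
  define w' where "w' = mapl \<tau> w"
  have w'S: "syms w' \<subseteq> S"
  proof -
    have "syms w' = \<tau> ` syms w" by (simp add: w'_def)
    moreover have "\<tau> ` T = S" using bij_betw_imp_surj_on[OF \<tau>] .
    ultimately show ?thesis using w(3) by blast
  qed
  have injt: "inj_on \<tau> (syms w)" using inj_on_subset[OF bij_betw_imp_inj_on[OF \<tau>] w(3)] .
  have w'r: "successively rp w'" using succ_mapl[OF injt] w(2) by (simp add: w'_def)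
  have w'ne: "w' \<noteq> []" using w(1) by (simp add: w'_def mapl_def)
  obtain n g where g: "\<And>s. g s \<in> carrier (sym_group n)"
    and ng: "eval_word (sym_group n) (mapl g w') \<noteq> \<one>\<^bsub>sym_group n\<^esub>"
    using residual[OF w'ne w'r] by blast
  define Q where "Q = sym_group n"
  have Q: "group Q" unfolding Q_def by (rule sym_group_is_group)
  define E where "E = S \<rightarrow>\<^sub>E carrier Q"
  have finQ: "finite (carrier Q)" unfolding Q_def
    by (simp add: sym_group_def finite_permutations)
  have finE: "finite E" unfolding E_def using fin finQ by (simp add: finite_PiE)
  have TS: "T \<subseteq> generate G S"
  proof
    fix t assume "t \<in> T"
    then have "t \<in> generate G T" by (rule generate.incl)
    then show "t \<in> generate G S" using gen by simp
  qed
  have sT: "\<sigma> s \<in> T" if "s \<in> S" for s using bij_betw_apply[OF \<sigma> that] .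
  define Phi where "Phi f = restrict (\<lambda>s. phi S Q f (\<sigma> s)) S" for f
  have fE: "f ` S \<subseteq> carrier Q" if "f \<in> E" for f using that by (auto simp: E_def)
  have PhiE: "Phi ` E \<subseteq> E"
  proof
    fix y assume "y \<in> Phi ` E"
    then obtain f where f: "f \<in> E" "y = Phi f" by blast
    have "phi S Q f (\<sigma> s) \<in> carrier Q" if "s \<in> S" for s
      using phi_props(3)[OF fb Q fE[OF f(1)] TS[THEN subsetD, OF sT[OF that]] TS[THEN subsetD, OF sT[OF that]]] .
    then show "y \<in> E" unfolding f(2) E_def Phi_def by auto
  qed
  have "inj_on Phi E"
  proof (rule inj_onI)
    fix f1 f2 assume f: "f1 \<in> E" "f2 \<in> E" "Phi f1 = Phi f2"
    have a: "phi S Q f1 (\<sigma> s) = phi S Q f2 (\<sigma> s)" if "s \<in> S" for s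
      using f(3) that unfolding Phi_def by (metis restrict_apply')
    have "phi S Q f1 t = phi S Q f2 t" if "t \<in> T" for t
      using a[OF bij_betw_apply[OF \<tau> that]] st[OF that] by simp
    then have "f1 s = f2 s" if "s \<in> S" for s
      using phi_agree[OF fb Q fE[OF f(1)] fE[OF f(2)] T(1) gen] that by blast
    then show "f1 = f2" using PiE_ext[OF f(1)[unfolded E_def] f(2)[unfolded E_def]] by blast
  qed
  then have "Phi ` E = E" using endo_inj_surj[OF finE PhiE] by blast
  moreover have "restrict g S \<in> E" unfolding E_def Q_def restrict_PiE_iff using g by blast
  ultimately have "restrict g S \<in> Phi ` E" by simp
  then obtain f where f1: "f \<in> E" and f2': "restrict g S = Phi f" by (rule imageE)
  note f = f1 f2'[symmetric]
  have e1: "mapl g w' = mapl (\<lambda>s. phi S Q f (\<sigma> s)) w'"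
  proof (rule mapl_cong)
    fix s assume "s \<in> syms w'"
    then have s: "s \<in> S" using w'S by (rule subsetD[rotated])
    have "g s = restrict g S s" using s by (rule restrict_apply'[symmetric])
    also have "\<dots> = Phi f s" using f(2) by simp
    also have "\<dots> = phi S Q f (\<sigma> s)" using s by (simp add: Phi_def)
    finally show "g s = phi S Q f (\<sigma> s)" .
  qed
  have e2: "mapl (\<lambda>s. phi S Q f (\<sigma> s)) w' = mapl (phi S Q f) (mapl (\<lambda>t. \<sigma> (\<tau> t)) w)"
    unfolding w'_def mapl_mapl by (simp add: o_def)
  have e3: "mapl (\<lambda>t. \<sigma> (\<tau> t)) w = w"
  proof -
    have "mapl (\<lambda>t. \<sigma> (\<tau> t)) w = mapl (\<lambda>t. t) w"
    proof (rule mapl_cong)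
      fix t assume "t \<in> syms w"
      then show "\<sigma> (\<tau> t) = t" using st w(3) by blast
    qed
    then show ?thesis by (simp add: mapl_id)
  qed
  have wS: "syms w \<subseteq> generate G S" using w(3) TS by blast
  have e4: "eval_word Q (mapl (phi S Q f) w) = phi S Q f (eval_word G w)"
    using phi_gen_word[OF fb Q fE[OF f(1)] wS] by simp
  have e5: "phi S Q f (eval_word G w) = \<one>\<^bsub>Q\<^esub>" using w(4) phi_one[OF fb Q fE[OF f(1)]] by simp
  have "eval_word Q (mapl g w') = \<one>\<^bsub>Q\<^esub>" unfolding e1 e2 e3 e4 e5 ..
  then show False using ng unfolding Q_def by blast
qed

end




context group begin

lemma nontriv_word:
  assumes B: "B \<subseteq> carrier G" and y: "y \<in> generate G B" "y \<noteq> \<one>"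
  shows "\<exists>u. u \<noteq> [] \<and> successively rp u \<and> syms u \<subseteq> B \<and> eval_word G u = y"
proof -
  obtain u where u: "syms u \<subseteq> B" "successively rp u" "eval_word G u = y"
    using generate_word[OF B y(1)] by blast
  have "u \<noteq> []" using u(3) y(2) by auto
  then show ?thesis using u by blast
qed

lemma ifp_words:
  assumes B: "insert h B \<subseteq> carrier G" and hB: "h \<notin> B" and AB: "A \<subseteq> generate G B"
  shows "w \<noteq> [] \<Longrightarrow> alternating w \<Longrightarrow>
     (\<forall>(b, y) \<in> set w. y \<noteq> \<one> \<and> (if b then y \<in> A else y \<in> generate G {h})) \<Longrightarrow>
     \<exists>W. W \<noteq> [] \<and> successively rp W \<and> syms W \<subseteq> insert h B \<and>
        eval_word G W = foldr (\<lambda>(b, y) z. y \<otimes> z) w \<one> \<and> (snd (hd W) \<in> B \<longleftrightarrow> fst (hd w))"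
proof (induct w)
  case Nil
  then show ?case by simp
next
  case (Cons x w)
  obtain b y where x: "x = (b, y)" by force
  have yc: "y \<noteq> \<one>" "if b then y \<in> A else y \<in> generate G {h}" using Cons.prems(3) x by auto
  have Bc: "B \<subseteq> carrier G" "{h} \<subseteq> carrier G" using B by auto
  obtain u where u: "u \<noteq> []" "successively rp u" "syms u \<subseteq> (if b then B else {h})" "eval_word G u = y"
  proof (cases b)
    case True
    then have "y \<in> generate G B" using yc AB by auto
    then show ?thesis using nontriv_word[OF Bc(1) _ yc(1)] that True by auto
  next
    case False
    then have "y \<in> generate G {h}" using yc by auto
    then show ?thesis using nontriv_word[OF Bc(2) _ yc(1)] that False by auto
  qed
  have uB: "syms u \<subseteq> insert h B" using u(3) by (auto split: if_splits)
  have uS: "syms u \<subseteq> carrier G" using uB B by blast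
  have hdu: "snd (hd u) \<in> B \<longleftrightarrow> b" and lastu: "snd (last u) \<in> B \<longleftrightarrow> b"
  proof -
    have "snd (hd u) \<in> syms u" "snd (last u) \<in> syms u" using u(1) by (auto simp: syms_def)
    then show "snd (hd u) \<in> B \<longleftrightarrow> b" "snd (last u) \<in> B \<longleftrightarrow> b"
      using u(3) hB by (auto split: if_splits)
  qed
  show ?case
  proof (cases w)
    case Nil
    then show ?thesis using u uS hdu x eval_word_carrier[OF uS] by (intro exI[of _ u]) (auto simp: uB)
  next
    case (Cons x2 w2)
    have altw: "alternating w" and fx2: "fst x2 \<noteq> b"
      using Cons.prems(2) \<open>w = x2 # w2\<close> x by (cases x2; auto)+
    obtain W where W: "W \<noteq> []" "successively rp W" "syms W \<subseteq> insert h B"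
        "eval_word G W = foldr (\<lambda>(b, y) z. y \<otimes> z) w \<one>" "snd (hd W) \<in> B \<longleftrightarrow> fst (hd w)"
      using Cons.hyps[OF _ altw] Cons.prems(3) \<open>w = x2 # w2\<close> by auto
    have WS: "syms W \<subseteq> carrier G" using W(3) B by blast
    have "snd (last u) \<noteq> snd (hd W)" using lastu W(5) fx2 \<open>w = x2 # w2\<close> by auto
    then have "rp (last u) (hd W)" by (simp add: rp_def)
    then have "successively rp (u @ W)" using u(2) W(2) by (simp add: successively_append_iff)
    moreover have "eval_word G (u @ W) = foldr (\<lambda>(b, y) z. y \<otimes> z) (x # w) \<one>"
      using eval_word_append[OF uS WS] u(4) W(4) x by simp
    moreover have "snd (hd (u @ W)) \<in> B \<longleftrightarrow> fst (hd (x # w))" using hdu u(1) x by simp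
    ultimately show ?thesis using u(1) uB W(3) by (intro exI[of _ "u @ W"]) auto
  qed
qed

lemma ifp:
  assumes fb: "free_basis G (insert h B)" and hB: "h \<notin> B" and AB: "A \<subseteq> generate G B"
    and sA: "subgroup A G"
  shows "internal_free_product G (generate G (A \<union> {h})) A (generate G {h}) \<and> h \<notin> A"
proof -
  have B: "insert h B \<subseteq> carrier G" using fb free_basis_carrier by auto
  have Ac: "A \<subseteq> carrier G" using sA subgroup.subset by blast
  have sH: "subgroup (generate G {h}) G" using B by (intro generate_is_subgroup) auto
  have gen: "generate G (A \<union> {h}) = generate G (A \<union> generate G {h})"
  proof
    show "generate G (A \<union> {h}) \<subseteq> generate G (A \<union> generate G {h})"
      by (rule mono_generate) (auto intro: generate.incl)
    have "A \<union> generate G {h} \<subseteq> generate G (A \<union> {h})"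
      using mono_generate[of "{h}" "A \<union> {h}"] generate.incl[of _ "A \<union> {h}" G] by blast
    then show "generate G (A \<union> generate G {h}) \<subseteq> generate G (A \<union> {h})"
      using B Ac by (intro generate_subgroup_incl generate_is_subgroup) auto
  qed
  have words: "foldr (\<lambda>(b, y) z. y \<otimes> z) w \<one> \<noteq> \<one>"
    if wa: "w \<noteq> []" "alternating w" "\<forall>(b, y) \<in> set w. y \<noteq> \<one> \<and> (if b then y \<in> A else y \<in> generate G {h})" for w
  proof -
    obtain W where W: "W \<noteq> []" "successively rp W" "syms W \<subseteq> insert h B"
        "eval_word G W = foldr (\<lambda>(b, y) z. y \<otimes> z) w \<one>"
      using ifp_words[OF B hB AB wa] by blast
    show ?thesis using free_basisD[OF fb W(1-3)] W(4) by simp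
  qed
  have ifp: "internal_free_product G (generate G (A \<union> {h})) A (generate G {h})"
    unfolding internal_free_product_def using sA sH gen words by blast
  have h1: "h \<noteq> \<one>"
  proof
    assume "h = \<one>"
    then have "eval_word G [(True, h)] = \<one>" by simp
    then show False using free_basisD[OF fb, of "[(True, h)]"] by simp
  qed
  have "h \<notin> A"
  proof
    assume hA: "h \<in> A"
    have hc: "h \<in> carrier G" using B by auto
    have ih: "inv h \<in> generate G {h}" by (rule generate.inv) simp
    have ih1: "inv h \<noteq> \<one>" using h1 hc by (metis inv_inv one_closed inv_one)
    have "foldr (\<lambda>(b, y) z. y \<otimes> z) [(True, h), (False, inv h)] \<one> \<noteq> \<one>"
      using words[of "[(True, h), (False, inv h)]"] hA ih ih1 h1 by simp
    then show False using hc by simp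
  qed
  then show ?thesis using ifp by blast
qed

end


theorem lemma2p3:
  fixes G :: "('a, 'm) monoid_scheme"
  assumes "locally_free G"
    and "rank_infinite G"
    and "fg_subgroup G A"
  shows "\<exists>x \<in> carrier G. x \<notin> A \<and>
           internal_free_product G (generate G (A \<union> {x})) A (generate G {x})"
proof (rule ccontr)
  assume contra: "\<not> ?thesis"
  have grp: "group G" using assms(1) by (simp add: locally_free_def)
  interpret group G by (rule grp)
  have lf: "\<And>H. fg_subgroup G H \<Longrightarrow> free_subgroup G H" using assms(1) by (simp add: locally_free_def)
  obtain T0 where T0: "finite T0" "T0 \<subseteq> carrier G" "A = generate G T0"
    using assms(3) by (auto simp: fg_subgroup_def)
  have sA: "subgroup A G" using T0 generate_is_subgroup by simp
  obtain B0 where B0: "free_basis G B0" "generate G B0 = A"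
    using lf[OF assms(3)] by (auto simp: free_subgroup_def)
  have finB0: "finite B0" using rank_bound[OF B0(1) T0(2) T0(1)] T0(3) B0(2) by simp
  define m where "m = card B0"
  have step: "\<exists>B'. free_basis G B' \<and> finite B' \<and> card B' \<le> m \<and> generate G B \<subseteq> generate G B' \<and> h \<in> generate G B'"
    if B: "free_basis G B" "finite B" "card B \<le> m" "A \<subseteq> generate G B" and h: "h \<in> carrier G" for B h
  proof -
    have Bc: "B \<subseteq> carrier G" using B(1) free_basis_carrier by auto
    have Tc: "insert h B \<subseteq> carrier G" "finite (insert h B)" using Bc h B(2) by auto
    have "fg_subgroup G (generate G (insert h B))" using Tc by (auto simp: fg_subgroup_def)
    then obtain S where S: "free_basis G S" "generate G S = generate G (insert h B)"
      using lf by (auto simp: free_subgroup_def)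
    have cS: "finite S" "card S \<le> card (insert h B)"
      using rank_bound[OF S(1) Tc(1) Tc(2) S(2)[symmetric]] by auto
    have sub1: "generate G B \<subseteq> generate G S" using S(2) mono_generate[of B "insert h B"] by auto
    have sub2: "h \<in> generate G S" using S(2) generate.incl[of h "insert h B" G] by auto
    show ?thesis
    proof (cases "card S \<le> m")
      case True
      then show ?thesis using S(1) cS(1) sub1 sub2 by blast
    next
      case False
      have ci: "card (insert h B) \<le> Suc (card B)" using B(2) by (simp add: card_insert_if)
      have hB: "h \<notin> B"
      proof
        assume "h \<in> B"
        then have "card (insert h B) = card B" by (simp add: insert_absorb)
        then show False using False cS(2) B(3) by simp
      qed
      have eq: "card (insert h B) = card S" using False cS(2) B(3) ci by simp
      have fbi: "free_basis G (insert h B)"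
        by (rule hopf[OF S(1) cS(1) Tc(1) Tc(2) eq S(2)[symmetric]])
      have "internal_free_product G (generate G (A \<union> {h})) A (generate G {h}) \<and> h \<notin> A"
        by (rule ifp[OF fbi hB B(4) sA])
      then show ?thesis using contra h by blast
    qed
  qed
  have cover: "\<exists>B. free_basis G B \<and> finite B \<and> card B \<le> m \<and> A \<subseteq> generate G B \<and> T \<subseteq> generate G B"
    if "finite T" "T \<subseteq> carrier G" for T
    using that
  proof (induct T rule: finite_induct)
    case empty
    then show ?case using B0 finB0 m_def by auto
  next
    case (insert h T)
    then obtain B where B: "free_basis G B" "finite B" "card B \<le> m" "A \<subseteq> generate G B" "T \<subseteq> generate G B"
      by auto
    obtain B' where B': "free_basis G B'" "finite B'" "card B' \<le> m" "generate G B \<subseteq> generate G B'" "h \<in> generate G B'"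
    proof -
      have hc: "h \<in> carrier G" using insert.prems by auto
      show ?thesis using step[OF B(1-4) hc] that by blast
    qed
    then show ?case using B by (intro exI[of _ B']) auto
  qed
  define P where "P H k \<longleftrightarrow> 0 < k \<and> (\<exists>F. free_subgroup_rank G F k \<and> H \<subseteq> F)" for H k
  have muP: "mu G H = (LEAST k. P H k)" for H by (simp add: mu_def P_def)
  obtain M where M: "\<And>H. fg_subgroup G H \<Longrightarrow> mu G H \<le> M"
  proof (cases "\<exists>k F. 0 < k \<and> free_subgroup_rank G F k")
    case True
    then obtain k0 F0 where k0: "0 < k0" "free_subgroup_rank G F0 k0" by blast
    obtain S0 where S0: "free_basis G S0" "generate G S0 = F0"
      using k0(2) by (auto simp: free_subgroup_rank_def)
    have sF0: "subgroup F0 G" using S0 free_basis_carrier generate_is_subgroup by blast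
    have "mu G H \<le> max m k0" if fgH: "fg_subgroup G H" for H
    proof -
      obtain T where T: "finite T" "T \<subseteq> carrier G" "H = generate G T"
        using fgH by (auto simp: fg_subgroup_def)
      obtain B where B: "free_basis G B" "finite B" "card B \<le> m" "T \<subseteq> generate G B"
        using cover[OF T(1,2)] by blast
      have Bc: "B \<subseteq> carrier G" using B(1) free_basis_carrier by auto
      have HB: "H \<subseteq> generate G B" using T(3) B(4) generate_subgroup_incl generate_is_subgroup[OF Bc] by auto
      show ?thesis
      proof (cases "B = {}")
        case True
        have "generate G B \<subseteq> F0" using True sF0 generate_subgroup_incl[of "{}" F0] by auto
        then have "P H k0" using HB k0 by (auto simp: P_def)
        then have "mu G H \<le> k0" unfolding muP by (rule Least_le)
        then show ?thesis by simp
      next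
        case False
        then have "0 < card B" using B(2) by (simp add: card_gt_0_iff)
        moreover have "free_subgroup_rank G (generate G B) (card B)"
          using B(1,2) by (auto simp: free_subgroup_rank_def)
        ultimately have "P H (card B)" using HB by (auto simp: P_def)
        then have "mu G H \<le> card B" unfolding muP by (rule Least_le)
        then show ?thesis using B(3) by simp
      qed
    qed
    then show ?thesis using that by blast
  next
    case False
    then have "\<And>H k. \<not> P H k" unfolding P_def by blast
    then have "P H = (\<lambda>k. False)" for H by blast
    then have "mu G H = (LEAST k::nat. False)" for H unfolding muP by simp
    then show ?thesis using that by (metis order_refl)
  qed
  define V where "V = {mu G H | H. fg_subgroup G H}"
  have "V \<subseteq> {..M}" using M by (auto simp: V_def)
  then have finV: "finite V" by (rule finite_subset) simp
  have "fg_subgroup G (generate G {})" by (auto simp: fg_subgroup_def)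
  then have neV: "V \<noteq> {}" by (auto simp: V_def)
  have "Max V \<in> V" "\<forall>k \<in> V. k \<le> Max V" using finV neV by auto
  then show False using assms(2) unfolding rank_infinite_def V_def by blast
qed


end
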